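(* Let $\mathcal{H}$ be an $n$-dimensional complex Hilbert space and let $\rho_1,\dots,\rho_m$ be density operators on $\mathcal{H}$ whose eigenvectors collectively span $\mathcal{H}$, with prior probabilities $p_1,\dots,p_m>0$, $\sum_i p_i=1$. Write $\rho_i=\phi_i\phi_i^*$ for some matrices (factors) $\phi_i$, set $\psi_i=\sqrt{p_i}\,\phi_i$, let $\Psi$ be the matrix with block columns $\psi_1,\dots,\psi_m$, and let $T=(\Psi\Psi^* )^{-1/2}$. Let $\mu_i=T\psi_i$ and $\Sigma_i=\mu_i\mu_i^*$ (the least-squares measurement, LSM). If there is a constant $\alpha$, independent of $i$, such that $\mu_i^*\psi_i=\psi_i^*T\psi_i=\alpha I$ for every $i=1,\dots,m$, then the LSM $\{\Sigma_i\}$ minimizes the probability of a detection error, i.e. it maximizes $P_d=\sum_{i=1}^m p_i\operatorname{tr}(\rho_i\Pi_i)$ over all measurements $\{\Pi_i\}_{i=1}^m$ with $\Pi_i\ge 0$ and $\sum_{i=1}^m\Pi_i=I$.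
   Context: A density operator is a positive semidefinite Hermitian operator of trace one. A measurement is a collection of positive semidefinite Hermitian operators $\Pi_1,\dots,\Pi_m$ on $\mathcal{H}$ summing to the identity; the probability of correct detection is $P_d=\sum_i p_i\operatorname{tr}(\rho_i\Pi_i)$ and the probability of a detection error is $1-P_d$. $(\cdot)^{-1/2}$ denotes the inverse of the unique positive Hermitian square root; $\Psi\Psi^*=\sum_i\psi_i\psi_i^*$ is invertible because the eigenvectors of the $\rho_i$ span $\mathcal{H}$. $I$ in $\alpha I$ denotes the identity matrix of size equal to the number of columns of $\phi_i$. *)

theory Defs
  imports "Jordan_Normal_Form.Jordan_Normal_Form" "Jordan_Normal_Form.Schur_Decomposition" "Jordan_Normal_Form.VS_Connect"
begin

definition hermitian :: "complex mat \<Rightarrow> bool" where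
  "hermitian A \<longleftrightarrow> mat_adjoint A = A"

definition psd :: "nat \<Rightarrow> complex mat \<Rightarrow> bool" where
  "psd n A \<longleftrightarrow> A \<in> carrier_mat n n \<and> hermitian A \<and>
     (\<forall>v \<in> carrier_vec n. 0 \<le> Re ((A *\<^sub>v v) \<bullet>c v))"

definition mat_trace :: "complex mat \<Rightarrow> complex" where
  "mat_trace A = (\<Sum>i<dim_row A. A $$ (i, i))"

definition density_op :: "nat \<Rightarrow> complex mat \<Rightarrow> bool" where
  "density_op n \<rho> \<longleftrightarrow> psd n \<rho> \<and> mat_trace \<rho> = 1"

fun msum :: "nat \<Rightarrow> (nat \<Rightarrow> complex mat) \<Rightarrow> nat \<Rightarrow> complex mat" where
  "msum n f 0 = 0\<^sub>m n n"
| "msum n f (Suc k) = msum n f k + f k"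

definition is_measurement :: "nat \<Rightarrow> nat \<Rightarrow> (nat \<Rightarrow> complex mat) \<Rightarrow> bool" where
  "is_measurement n m Pm \<longleftrightarrow> (\<forall>i<m. psd n (Pm i)) \<and> msum n Pm m = 1\<^sub>m n"

definition prob_detect :: "nat \<Rightarrow> (nat \<Rightarrow> real) \<Rightarrow> (nat \<Rightarrow> complex mat) \<Rightarrow> (nat \<Rightarrow> complex mat) \<Rightarrow> real" where
  "prob_detect m p \<rho> Pm = (\<Sum>i<m. p i * Re (mat_trace (\<rho> i * Pm i)))"

definition spans :: "nat \<Rightarrow> complex vec set \<Rightarrow> bool" where
  "spans n E \<longleftrightarrow> E \<subseteq> carrier_vec n \<and>
     module.span class_ring (module_vec TYPE(complex) n) E = carrier_vec n"

text \<open>Eigenvectors of the rho i belonging to nonzero eigenvalues (i.e. spanning their supports).\<close>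
definition support_eigvecs :: "nat \<Rightarrow> (nat \<Rightarrow> complex mat) \<Rightarrow> complex vec set" where
  "support_eigvecs m \<rho> = {v. \<exists>i<m. \<exists>k. k \<noteq> 0 \<and> eigenvector (\<rho> i) v k}"

end

theory Submission
  imports Defs
begin


lemma adj_dims[simp]: "dim_row (mat_adjoint A) = dim_col A" "dim_col (mat_adjoint A) = dim_row A"
  by (auto simp: mat_adjoint_def)

lemma adj_index[simp]: "i < dim_col A \<Longrightarrow> j < dim_row A \<Longrightarrow> mat_adjoint A $$ (i,j) = cnj (A $$ (j,i))"
  by (auto simp: mat_adjoint_def mat_of_rows_def)

lemma adj_carrier: "A \<in> carrier_mat a b \<Longrightarrow> mat_adjoint A \<in> carrier_mat b a"
  unfolding carrier_mat_def by simp

lemma adj_mult: "A \<in> carrier_mat a b \<Longrightarrow> B \<in> carrier_mat b c \<Longrightarrow>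
   mat_adjoint (A*B) = mat_adjoint B * mat_adjoint (A :: complex mat)"
  by (rule eq_matI) (auto simp: scalar_prod_def sum_conjugate[simplified] mult.commute)

lemma adj_adj[simp]: "mat_adjoint (mat_adjoint (A::complex mat)) = A"
  by (rule eq_matI) auto

lemma adj_smult: "mat_adjoint (c \<cdot>\<^sub>m (A::complex mat)) = cnj c \<cdot>\<^sub>m mat_adjoint A"
  by (rule eq_matI) auto

lemma adj_add: "A \<in> carrier_mat a b \<Longrightarrow> B \<in> carrier_mat a b \<Longrightarrow>
  mat_adjoint (A + B) = mat_adjoint A + mat_adjoint (B::complex mat)"
  by (rule eq_matI) auto

lemma adj_minus: "A \<in> carrier_mat a b \<Longrightarrow> B \<in> carrier_mat a b \<Longrightarrow>
  mat_adjoint (A - B) = mat_adjoint A - mat_adjoint (B::complex mat)"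
  by (rule eq_matI) auto

lemma adj_one[simp]: "mat_adjoint (1\<^sub>m n :: complex mat) = 1\<^sub>m n"
  by (rule eq_matI) auto

lemma adj_zero[simp]: "mat_adjoint (0\<^sub>m a b :: complex mat) = 0\<^sub>m b a"
  by (rule eq_matI) auto

lemma cprod_comm: "v \<in> carrier_vec n \<Longrightarrow> w \<in> carrier_vec n \<Longrightarrow> v \<bullet>c w = cnj (w \<bullet>c (v::complex vec))"
  by (auto simp: scalar_prod_def sum_conjugate[simplified] mult.commute)

lemma adj_mult_vec: "A \<in> carrier_mat a b \<Longrightarrow> v \<in> carrier_vec b \<Longrightarrow> w \<in> carrier_vec a \<Longrightarrow>
  (A *\<^sub>v v) \<bullet>c w = v \<bullet>c (mat_adjoint A *\<^sub>v (w::complex vec))"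
proof -
  assume A: "A \<in> carrier_mat a b" and v: "v \<in> carrier_vec b" and w: "w \<in> carrier_vec a"
  have "(A *\<^sub>v v) \<bullet>c w = (\<Sum>i<a. (\<Sum>k<b. A $$ (i,k) * v $ k) * cnj (w $ i))"
    using A v w by (auto simp: scalar_prod_def atLeast0LessThan intro!: sum.cong)
  also have "\<dots> = (\<Sum>i<a. \<Sum>k<b. A $$ (i,k) * v $ k * cnj (w $ i))"
    by (simp add: sum_distrib_right)
  also have "\<dots> = (\<Sum>k<b. \<Sum>i<a. A $$ (i,k) * v $ k * cnj (w $ i))"
    by (rule sum.swap)
  also have "\<dots> = (\<Sum>k<b. v $ k * cnj (\<Sum>i<a. cnj (A $$ (i,k)) * w $ i))"
    by (simp add: sum_distrib_left sum_conjugate[simplified] mult_ac)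
  also have "\<dots> = v \<bullet>c (mat_adjoint A *\<^sub>v w)"
    using A v w by (auto simp: scalar_prod_def atLeast0LessThan intro!: sum.cong)
  finally show ?thesis .
qed

lemma trace_comm: "A \<in> carrier_mat a b \<Longrightarrow> B \<in> carrier_mat b a \<Longrightarrow>
  mat_trace (A * B) = mat_trace (B * (A::complex mat))"
proof -
  assume A: "A \<in> carrier_mat a b" and B: "B \<in> carrier_mat b a"
  have "mat_trace (A * B) = (\<Sum>i<a. \<Sum>k<b. A $$ (i,k) * B $$ (k,i))"
    using A B by (auto simp: mat_trace_def scalar_prod_def atLeast0LessThan intro!: sum.cong)
  also have "\<dots> = (\<Sum>k<b. \<Sum>i<a. B $$ (k,i) * A $$ (i,k))"
    by (subst sum.swap) (simp add: mult.commute)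
  also have "\<dots> = mat_trace (B * A)"
    using A B by (auto simp: mat_trace_def scalar_prod_def atLeast0LessThan intro!: sum.cong)
  finally show ?thesis .
qed

lemma trace_add: "A \<in> carrier_mat n n \<Longrightarrow> B \<in> carrier_mat n n \<Longrightarrow> mat_trace (A + B) = mat_trace A + mat_trace (B::complex mat)"
  by (auto simp: mat_trace_def sum.distrib)

lemma trace_minus: "A \<in> carrier_mat n n \<Longrightarrow> B \<in> carrier_mat n n \<Longrightarrow> mat_trace (A - B) = mat_trace A - mat_trace (B::complex mat)"
  by (auto simp: mat_trace_def sum_subtractf)

lemma trace_smult: "A \<in> carrier_mat n n \<Longrightarrow> mat_trace (c \<cdot>\<^sub>m A) = c * mat_trace (A::complex mat)"
  by (auto simp: mat_trace_def sum_distrib_left)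

lemma trace_one: "mat_trace (1\<^sub>m n :: complex mat) = of_nat n"
  by (auto simp: mat_trace_def)

lemma trace_zero: "mat_trace (0\<^sub>m n n :: complex mat) = 0"
  by (auto simp: mat_trace_def)

lemma msum_carrier: "(\<And>i. i < k \<Longrightarrow> f i \<in> carrier_mat n n) \<Longrightarrow> msum n f k \<in> carrier_mat n n"
  by (induct k) auto

lemma trace_mult_msum: "A \<in> carrier_mat n n \<Longrightarrow> (\<And>i. i < k \<Longrightarrow> f i \<in> carrier_mat n n) \<Longrightarrow>
  mat_trace (A * msum n f k) = (\<Sum>i<k. mat_trace (A * f i))"
proof (induct k)
  case 0 then show ?case by (simp add: trace_zero)
next
  case (Suc k)
  have c: "msum n f k \<in> carrier_mat n n" using Suc by (intro msum_carrier) auto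
  have "A * msum n f (Suc k) = A * msum n f k + A * f k"
    using Suc c by (simp add: mult_add_distrib_mat)
  then show ?case using Suc c by (simp add: trace_add[of _ n])
qed



definition bf :: "complex mat \<Rightarrow> complex vec \<Rightarrow> complex vec \<Rightarrow> complex" where
  "bf A x y = (A *\<^sub>v x) \<bullet>c y"

lemma bf_expand: "A \<in> carrier_mat n n \<Longrightarrow> x \<in> carrier_vec n \<Longrightarrow> y \<in> carrier_vec n \<Longrightarrow>
  bf A x y = (\<Sum>a<n. \<Sum>b<n. A $$ (a,b) * x $ b * cnj (y $ a))"
  by (auto simp: bf_def scalar_prod_def atLeast0LessThan sum_distrib_right intro!: sum.cong)

lemma bf_add_left: "A \<in> carrier_mat n n \<Longrightarrow> x \<in> carrier_vec n \<Longrightarrow> x' \<in> carrier_vec n \<Longrightarrow> y \<in> carrier_vec n \<Longrightarrow>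
  bf A (x + x') y = bf A x y + bf A x' y"
  unfolding bf_def by (simp add: mult_add_distrib_mat_vec[of _ n n] add_scalar_prod_distrib[of _ n])

lemma bf_add_right: "A \<in> carrier_mat n n \<Longrightarrow> x \<in> carrier_vec n \<Longrightarrow> y' \<in> carrier_vec n \<Longrightarrow> y \<in> carrier_vec n \<Longrightarrow>
  bf A x (y + y') = bf A x y + bf A x y'"
  unfolding bf_def by (simp add: conjugate_add_vec[of _ n] scalar_prod_add_distrib[of _ n])

lemma bf_minus_left: "A \<in> carrier_mat n n \<Longrightarrow> x \<in> carrier_vec n \<Longrightarrow> x' \<in> carrier_vec n \<Longrightarrow> y \<in> carrier_vec n \<Longrightarrow>
  bf A (x - x') y = bf A x y - bf A x' y"
  unfolding bf_def by (simp add: mult_minus_distrib_mat_vec[of _ n n] minus_scalar_prod_distrib[of _ n])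

lemma bf_minus_right: "A \<in> carrier_mat n n \<Longrightarrow> x \<in> carrier_vec n \<Longrightarrow> y' \<in> carrier_vec n \<Longrightarrow> y \<in> carrier_vec n \<Longrightarrow>
  bf A x (y - y') = bf A x y - bf A x y'"
  by (simp add: bf_expand sum_subtractf[symmetric] right_diff_distrib)

lemma bf_smult_left: "A \<in> carrier_mat n n \<Longrightarrow> x \<in> carrier_vec n \<Longrightarrow> y \<in> carrier_vec n \<Longrightarrow>
  bf A (s \<cdot>\<^sub>v x) y = s * bf A x y"
  by (simp add: bf_expand sum_distrib_left mult_ac)

lemma bf_smult_right: "A \<in> carrier_mat n n \<Longrightarrow> x \<in> carrier_vec n \<Longrightarrow> y \<in> carrier_vec n \<Longrightarrow>
  bf A x (s \<cdot>\<^sub>v y) = cnj s * bf A x y"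
  by (simp add: bf_expand sum_distrib_left mult_ac)

lemma mult_unit_vec: "A \<in> carrier_mat n n \<Longrightarrow> k < n \<Longrightarrow> A *\<^sub>v unit_vec n k = col (A::complex mat) (k::nat)"
proof (rule eq_vecI)
  fix i assume A: "A \<in> carrier_mat n n" and k: "k < n" and i: "i < dim_vec (col A k)"
  then show "(A *\<^sub>v unit_vec n k) $ i = col A k $ i"
    using scalar_prod_right_unit[OF k, of "row A i"] by auto
qed auto

lemma conj_unit_vec[simp]: "conjugate (unit_vec n k :: complex vec) = unit_vec n k"
  by (rule eq_vecI) (auto simp: unit_vec_def)

lemma bf_unit_left: "A \<in> carrier_mat n n \<Longrightarrow> k < n \<Longrightarrow> y \<in> carrier_vec n \<Longrightarrow>
  bf A (unit_vec n k) y = col A k \<bullet>c y"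
  by (simp add: bf_def mult_unit_vec)

lemma bf_unit_right: "A \<in> carrier_mat n n \<Longrightarrow> k < n \<Longrightarrow> x \<in> carrier_vec n \<Longrightarrow>
  bf A x (unit_vec n k) = (A *\<^sub>v x) $ k"
  by (simp add: bf_def)

lemma hermitianD: "hermitian A \<Longrightarrow> A \<in> carrier_mat n n \<Longrightarrow> a < n \<Longrightarrow> b < n \<Longrightarrow> A $$ (a,b) = cnj (A $$ (b,a))"
  unfolding hermitian_def by (metis adj_index carrier_matD)

lemma bf_herm: "hermitian A \<Longrightarrow> A \<in> carrier_mat n n \<Longrightarrow> x \<in> carrier_vec n \<Longrightarrow> y \<in> carrier_vec n \<Longrightarrow>
  bf A x y = cnj (bf A y x)"
proof -
  assume h: "hermitian A" and A: "A \<in> carrier_mat n n" and x: "x \<in> carrier_vec n" and y: "y \<in> carrier_vec n"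
  have "bf A x y = x \<bullet>c (A *\<^sub>v y)" unfolding bf_def
    using adj_mult_vec[OF A x y] h unfolding hermitian_def by simp
  also have "\<dots> = cnj (bf A y x)" unfolding bf_def using A x y by (subst cprod_comm[of _ n]) auto
  finally show ?thesis .
qed

lemma psdD: "psd n A \<Longrightarrow> v \<in> carrier_vec n \<Longrightarrow> 0 \<le> Re (bf A v v)"
  unfolding psd_def bf_def by auto

lemma cprod_self: "Re (v \<bullet>c v) \<ge> 0" "Im (v \<bullet>c (v::complex vec)) = 0"
  using conjugate_square_ge_0_vec[of v] by (auto simp: less_eq_complex_def)

lemma psd_col_zero:
  assumes P: "psd n P" and k: "k < n" and d: "P $$ (k,k) = 0"
  shows "col P k = 0\<^sub>v n"
proof (rule ccontr)
  assume nz: "col P k \<noteq> 0\<^sub>v n"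
  have Pc: "P \<in> carrier_mat n n" and h: "hermitian P" using P unfolding psd_def by auto
  define c where "c = col P k"
  define e :: "complex vec" where "e = unit_vec n k"
  have c: "c \<in> carrier_vec n" unfolding c_def using Pc by auto
  have e: "e \<in> carrier_vec n" unfolding e_def by auto
  have cc: "Re (c \<bullet>c c) > 0" using nz c cprod_self[of c] conjugate_square_greater_0_vec[OF c]
    unfolding c_def[symmetric] by (auto simp: less_complex_def)
  have ee: "bf P e e = 0" unfolding e_def using Pc k d by (simp add: bf_unit_left)
  have ec: "bf P e c = c \<bullet>c c" unfolding e_def c_def using Pc k by (simp add: bf_unit_left)
  have ce: "bf P c e = cnj (c \<bullet>c c)" using bf_herm[OF h Pc c e] ec by simp
  have ce': "Re (bf P c e) = Re (c \<bullet>c c)" using ce by simp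
  define s :: real where "s = - (\<bar>Re (bf P c c)\<bar> + 1) / (2 * Re (c \<bullet>c c))"
  define x where "x = c + complex_of_real s \<cdot>\<^sub>v e"
  have x: "x \<in> carrier_vec n" unfolding x_def using c e by auto
  have "bf P x x = bf P c c + s * bf P c e + s * bf P e c + s * s * bf P e e"
    unfolding x_def using Pc c e
    by (simp add: bf_add_left[of _ n] bf_add_right[of _ n] bf_smult_left[of _ n] bf_smult_right[of _ n] algebra_simps)
  then have "Re (bf P x x) = Re (bf P c c) + 2 * s * Re (c \<bullet>c c)"
    using ee ec ce' by simp
  also have "\<dots> = Re (bf P c c) - (\<bar>Re (bf P c c)\<bar> + 1)" unfolding s_def using cc by simp
  also have "\<dots> < 0" by simp
  finally show False using psdD[OF P x] by simp
qed


lemma smult_mat_vec: "A \<in> carrier_mat n n \<Longrightarrow> v \<in> carrier_vec n \<Longrightarrow> (k \<cdot>\<^sub>m A) *\<^sub>v v = k \<cdot>\<^sub>v (A *\<^sub>v (v::complex vec))"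
  by (rule eq_vecI) (auto simp: scalar_prod_def sum_distrib_left mult_ac)

definition outer :: "complex vec \<Rightarrow> complex mat" where
  "outer c = mat (dim_vec c) (dim_vec c) (\<lambda>(a,b). c $ a * cnj (c $ b))"

lemma outer_dims[simp]: "dim_row (outer c) = dim_vec c" "dim_col (outer c) = dim_vec c"
  unfolding outer_def by auto

lemma outer_carrier[simp]: "c \<in> carrier_vec n \<Longrightarrow> outer c \<in> carrier_mat n n"
  unfolding outer_def by auto

lemma outer_index[simp]: "c \<in> carrier_vec n \<Longrightarrow> a < n \<Longrightarrow> b < n \<Longrightarrow> outer c $$ (a,b) = c $ a * cnj (c $ b)"
  unfolding outer_def by auto

lemma outer_mult_vec: "c \<in> carrier_vec n \<Longrightarrow> v \<in> carrier_vec n \<Longrightarrow> outer c *\<^sub>v v = (v \<bullet>c c) \<cdot>\<^sub>v c"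
  by (rule eq_vecI) (auto simp: outer_def scalar_prod_def sum_distrib_left mult_ac)

lemma trace_outer: "X \<in> carrier_mat n n \<Longrightarrow> c \<in> carrier_vec n \<Longrightarrow> mat_trace (X * outer c) = bf X c c"
proof -
  assume X: "X \<in> carrier_mat n n" and c: "c \<in> carrier_vec n"
  show ?thesis unfolding bf_expand[OF X c c] mat_trace_def
    using X c by (auto simp: scalar_prod_def atLeast0LessThan sum_distrib_right mult_ac intro!: sum.cong)
qed

lemma psd_diag:
  assumes P: "psd n P" and k: "k < n"
  shows "Im (P $$ (k,k)) = 0" "Re (P $$ (k,k)) \<ge> 0"
proof -
  have Pc: "P \<in> carrier_mat n n" and h: "hermitian P" using P unfolding psd_def by auto
  show "Im (P $$ (k,k)) = 0" using hermitianD[OF h Pc k k] by (metis cnj.simps(2) neg_equal_zero)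
  have "bf P (unit_vec n k) (unit_vec n k) = P $$ (k,k)" using Pc k by (simp add: bf_unit_left)
  then show "Re (P $$ (k,k)) \<ge> 0" using psdD[OF P, of "unit_vec n k"] by simp
qed

lemma schur_step:
  assumes P: "psd n P" and k: "k < n" and d0: "P $$ (k,k) \<noteq> 0"
  shows "psd n (P - (1 / P $$ (k,k)) \<cdot>\<^sub>m outer (col P k))"
proof -
  define d where "d = P $$ (k,k)"
  define c where "c = col P k"
  define e :: "complex vec" where "e = unit_vec n k"
  define P' where "P' = P - (1 / d) \<cdot>\<^sub>m outer c"
  have Pc: "P \<in> carrier_mat n n" and h: "hermitian P" using P unfolding psd_def by auto
  have c: "c \<in> carrier_vec n" unfolding c_def using Pc by auto
  have e: "e \<in> carrier_vec n" unfolding e_def by auto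
  have dr: "cnj d = d" using psd_diag[OF P k] unfolding d_def by (simp add: complex_eq_iff)
  have P'c: "P' \<in> carrier_mat n n" unfolding P'_def using Pc c by (simp add: minus_carrier_mat)
  have ck: "c $ k = d" unfolding c_def d_def using Pc k by auto
  have herm: "hermitian P'" unfolding hermitian_def
  proof (rule eq_matI)
    fix a b assume a: "a < dim_row P'" and b: "b < dim_col P'"
    then have a: "a < n" and b: "b < n" using P'c by auto
    show "mat_adjoint P' $$ (a, b) = P' $$ (a, b)"
      using a b Pc c P'c hermitianD[OF h Pc a b] dr unfolding P'_def c_def
      by (auto simp: mult_ac)
  qed (use P'c in auto)
  have "0 \<le> Re (bf P' v v)" if v: "v \<in> carrier_vec n" for v
  proof -
    define t where "t = (v \<bullet>c c) / d"
    define w where "w = v - t \<cdot>\<^sub>v e"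
    have w: "w \<in> carrier_vec n" unfolding w_def using v e by auto
    have Pe: "P *\<^sub>v e = c" unfolding e_def c_def using Pc k by (simp add: mult_unit_vec)
    have "P' *\<^sub>v v = P *\<^sub>v v - (1 / d) \<cdot>\<^sub>v (outer c *\<^sub>v v)"
      unfolding P'_def using Pc c v by (simp add: minus_mult_distrib_mat_vec[of _ n n] smult_mat_vec[of _ n])
    also have "\<dots> = P *\<^sub>v v - t \<cdot>\<^sub>v c"
      using c v by (simp add: outer_mult_vec t_def smult_smult_assoc)
    also have "\<dots> = P *\<^sub>v w"
      unfolding w_def using Pc v e Pe by (simp add: mult_minus_distrib_mat_vec[of _ n n] mult_mat_vec[of _ n n])
    finally have 1: "bf P' v v = bf P w v" unfolding bf_def by simp
    have ee: "bf P e e = d" unfolding e_def using Pc k ck c_def by (simp add: bf_unit_left)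
    have ve: "bf P v e = v \<bullet>c c"
      using bf_herm[OF h Pc v e] bf_unit_left[OF Pc k v] cprod_comm[OF v c] unfolding e_def c_def by simp
    have we: "bf P w e = 0"
      unfolding w_def using Pc v e ee ve d0 unfolding d_def[symmetric]
      by (simp add: bf_minus_left[of _ n] bf_smult_left[of _ n] t_def)
    have "bf P w (v - t \<cdot>\<^sub>v e) = bf P w v - cnj t * bf P w e"
      using Pc v e w by (simp add: bf_minus_right[of _ n] bf_smult_right[of _ n])
    then have "bf P w w = bf P w v" using we by (simp add: w_def[symmetric])
    then show ?thesis using 1 psdD[OF P w] by simp
  qed
  then show ?thesis unfolding psd_def using P'c herm unfolding bf_def P'_def c_def d_def by auto
qed


lemma trace_psd_aux:
  assumes X: "psd n X"
  shows "\<forall>P. psd n P \<and> (\<forall>a<n. \<forall>b<n. (a < n - j \<or> b < n - j) \<longrightarrow> P $$ (a,b) = 0)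
           \<longrightarrow> 0 \<le> Re (mat_trace (X * P))"
proof (induct j)
  case 0
  show ?case
  proof (intro allI impI)
    fix P assume "psd n P \<and> (\<forall>a<n. \<forall>b<n. (a < n - 0 \<or> b < n - 0) \<longrightarrow> P $$ (a,b) = 0)"
    then have Pc: "P \<in> carrier_mat n n" and z: "\<And>a b. a < n \<Longrightarrow> b < n \<Longrightarrow> P $$ (a,b) = 0"
      unfolding psd_def by auto
    have "P = 0\<^sub>m n n" using Pc z by (intro eq_matI) auto
    moreover have Xc: "X \<in> carrier_mat n n" using X unfolding psd_def by auto
    ultimately have "X * P = 0\<^sub>m n n" by simp
    then show "0 \<le> Re (mat_trace (X * P))" by (simp add: trace_zero)
  qed
next
  case (Suc j)
  show ?case
  proof (intro allI impI)
    fix P assume asm: "psd n P \<and> (\<forall>a<n. \<forall>b<n. (a < n - Suc j \<or> b < n - Suc j) \<longrightarrow> P $$ (a,b) = 0)"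
    then have P: "psd n P" and z: "\<And>a b. a < n \<Longrightarrow> b < n \<Longrightarrow> (a < n - Suc j \<or> b < n - Suc j) \<Longrightarrow> P $$ (a,b) = 0"
      by auto
    have Pc: "P \<in> carrier_mat n n" and h: "hermitian P" using P unfolding psd_def by auto
    have Xc: "X \<in> carrier_mat n n" using X unfolding psd_def by auto
    show "0 \<le> Re (mat_trace (X * P))"
    proof (cases "n \<le> j")
      case True
      then show ?thesis using Suc asm by auto
    next
      case False
      define k where "k = n - Suc j"
      have k: "k < n" and nj: "n - j = Suc k" using False unfolding k_def by auto
      show ?thesis
      proof (cases "col P k = 0\<^sub>v n")
        case True
        have "P $$ (a,b) = 0" if a: "a < n" and b: "b < n" and ab: "a < Suc k \<or> b < Suc k" for a b
        proof -
          have colk: "P $$ (i,k) = 0" if "i < n" for i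
          proof -
            have "col P k $ i = P $$ (i,k)" using that Pc k by auto
            moreover have "col P k $ i = 0" using True that by simp
            ultimately show ?thesis by simp
          qed
          consider "a < k \<or> b < k" | "a = k" | "b = k" using ab by linarith
          then show ?thesis
          proof cases
            case 1 then show ?thesis using z a b unfolding k_def by auto
          next
            case 2 then show ?thesis using hermitianD[OF h Pc a b] colk[OF b] by simp
          next
            case 3 then show ?thesis using colk[OF a] by simp
          qed
        qed
        then show ?thesis using Suc P nj by auto
      next
        case False
        define d where "d = P $$ (k,k)"
        define c where "c = col P k"
        have d0: "d \<noteq> 0" using psd_col_zero[OF P k] False unfolding d_def by auto
        have dr: "cnj d = d" "Im d = 0" using psd_diag[OF P k] unfolding d_def by (simp_all add: complex_eq_iff)
        have dpos: "Re d > 0" using psd_diag[OF P k] d0 dr unfolding d_def by (auto simp: complex_eq_iff)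
        have c: "c \<in> carrier_vec n" unfolding c_def using Pc by auto
        define P' where "P' = P - (1 / d) \<cdot>\<^sub>m outer c"
        have P': "psd n P'" unfolding P'_def d_def c_def using schur_step[OF P k] d0 d_def by auto
        have P'c: "P' \<in> carrier_mat n n" using P' unfolding psd_def by auto
        have ci: "c $ i = P $$ (i,k)" if "i < n" for i unfolding c_def using that Pc k by auto
        have z': "P' $$ (a,b) = 0" if a: "a < n" and b: "b < n" and ab: "a < Suc k \<or> b < Suc k" for a b
        proof -
          have P'ab: "P' $$ (a,b) = P $$ (a,b) - (1/d) * (P $$ (a,k) * cnj (P $$ (b,k)))"
            unfolding P'_def using a b Pc c ci by simp
          consider "a < k" | "b < k" | "a = k" | "b = k" using ab by linarith
          then show ?thesis
          proof cases
            case 1 then show ?thesis using z a b k P'ab unfolding k_def by auto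
          next
            case 2 then show ?thesis using z a b k P'ab unfolding k_def by auto
          next
            case 3 then show ?thesis using P'ab hermitianD[OF h Pc b k] d0 unfolding d_def by (simp add: field_simps)
          next
            case 4 then show ?thesis using P'ab dr d0 unfolding d_def by (simp add: field_simps)
          qed
        qed
        have IH: "0 \<le> Re (mat_trace (X * P'))" using Suc P' z' nj by auto
        have PP: "P = P' + (1/d) \<cdot>\<^sub>m outer c" unfolding P'_def using Pc c
          by (intro eq_matI) auto
        have "X * P = X * P' + (1/d) \<cdot>\<^sub>m (X * outer c)"
          unfolding PP using Xc P'c c by (simp add: mult_add_distrib_mat[of _ n n] mult_smult_distrib[of X n n "outer c" n])
        then have "mat_trace (X * P) = mat_trace (X * P') + (1/d) * bf X c c"
          using Xc P'c c by (simp add: trace_add[of _ n] trace_smult[of _ n] trace_outer)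
        moreover have "Re ((1/d) * bf X c c) \<ge> 0"
        proof -
          have dd: "d = complex_of_real (Re d)" using dr by (simp add: complex_eq_iff)
          have eq: "1/d = complex_of_real (1 / Re d)" by (subst dd) (simp only: of_real_divide of_real_1)
          have "Re (complex_of_real (1 / Re d) * bf X c c) = (1 / Re d) * Re (bf X c c)" by simp
          also have "\<dots> \<ge> 0" using psdD[OF X c] dpos by simp
          finally show ?thesis unfolding eq .
        qed
        ultimately show ?thesis using IH by simp
      qed
    qed
  qed
qed

lemma trace_psd:
  assumes "psd n X" "psd n P"
  shows "0 \<le> Re (mat_trace (X * P))"
  using trace_psd_aux[OF assms(1), of n] assms(2) by auto



lemma psd_gram:
  assumes A: "A \<in> carrier_mat n k"
  shows "psd n (A * mat_adjoint A)"
proof -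
  have Ac: "mat_adjoint A \<in> carrier_mat k n" using A by (rule adj_carrier)
  have C: "A * mat_adjoint A \<in> carrier_mat n n" using A Ac by simp
  have h: "hermitian (A * mat_adjoint A)" unfolding hermitian_def
    using adj_mult[OF A Ac] by simp
  have "0 \<le> Re (((A * mat_adjoint A) *\<^sub>v v) \<bullet>c v)" if v: "v \<in> carrier_vec n" for v
  proof -
    define w where "w = mat_adjoint A *\<^sub>v v"
    have w: "w \<in> carrier_vec k" unfolding w_def using Ac v by simp
    have "((A * mat_adjoint A) *\<^sub>v v) \<bullet>c v = (A *\<^sub>v w) \<bullet>c v"
      unfolding w_def using assoc_mult_mat_vec[OF A Ac v] by simp
    also have "\<dots> = w \<bullet>c w" using adj_mult_vec[OF A w v] unfolding w_def by simp
    finally show ?thesis using cprod_self(1)[of w] by simp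
  qed
  then show ?thesis unfolding psd_def using C h by auto
qed

lemma msum_conj:
  assumes A: "A \<in> carrier_mat n n" and B: "B \<in> carrier_mat n n"
    and f: "\<And>i. i < k \<Longrightarrow> f i \<in> carrier_mat n n"
  shows "msum n (\<lambda>i. A * f i * B) k = A * msum n f k * B"
  using f
proof (induct k)
  case 0 then show ?case using A B by simp
next
  case (Suc k)
  have c: "msum n f k \<in> carrier_mat n n" using Suc by (intro msum_carrier) auto
  have fk: "f k \<in> carrier_mat n n" using Suc by auto
  have "msum n (\<lambda>i. A * f i * B) (Suc k) = A * msum n f k * B + A * f k * B"
    using Suc by simp
  also have "\<dots> = (A * msum n f k + A * f k) * B"
    using A B c fk by (simp add: add_mult_distrib_mat[of _ n n])
  also have "\<dots> = A * msum n f (Suc k) * B"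
    using A B c fk by (simp add: mult_add_distrib_mat[of _ n n])
  finally show ?case .
qed

lemma bf_minus_mat: "X \<in> carrier_mat n n \<Longrightarrow> Y \<in> carrier_mat n n \<Longrightarrow> v \<in> carrier_vec n \<Longrightarrow>
  bf (X - Y) v v = bf X v v - bf Y v v"
  unfolding bf_def by (simp add: minus_mult_distrib_mat_vec[of _ n n] minus_scalar_prod_distrib[of _ n])

lemma bf_smult_mat: "X \<in> carrier_mat n n \<Longrightarrow> v \<in> carrier_vec n \<Longrightarrow>
  bf (c \<cdot>\<^sub>m X) v v = c * bf X v v"
  unfolding bf_def by (simp add: smult_mat_vec[of _ n])

lemma adj_herm: "hermitian A \<Longrightarrow> mat_adjoint A = A"
  unfolding hermitian_def by simp


lemma T_props:
  assumes S: "psd n S" and T: "T \<in> carrier_mat n n" and TS: "T * S = 1\<^sub>m n"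
  shows "S * T = 1\<^sub>m n" "hermitian T" "psd n T"
proof -
  have Sc: "S \<in> carrier_mat n n" and hS: "hermitian S" using S unfolding psd_def by auto
  show ST: "S * T = 1\<^sub>m n" using mat_mult_left_right_inverse[OF T Sc TS] .
  have Ta: "mat_adjoint T \<in> carrier_mat n n" using T by (rule adj_carrier)
  have "S * mat_adjoint T = 1\<^sub>m n"
    using adj_mult[OF T Sc] TS adj_herm[OF hS] by simp
  have "mat_adjoint T = (T * S) * mat_adjoint T" using TS left_mult_one_mat[OF Ta] by simp
  also have "\<dots> = T * (S * mat_adjoint T)" using assoc_mult_mat[OF T Sc Ta] .
  also have "\<dots> = T" using \<open>S * mat_adjoint T = 1\<^sub>m n\<close> T by simp
  finally show hT: "hermitian T" unfolding hermitian_def .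
  have "0 \<le> Re (bf T v v)" if v: "v \<in> carrier_vec n" for v
  proof -
    define x where "x = T *\<^sub>v v"
    have x: "x \<in> carrier_vec n" unfolding x_def using T v by simp
    have vx: "v = S *\<^sub>v x" unfolding x_def using Sc T v ST
      by (metis assoc_mult_mat_vec one_mult_mat_vec)
    have "bf T v v = x \<bullet>c (S *\<^sub>v x)" unfolding bf_def x_def[symmetric] using vx by simp
    also have "\<dots> = cnj (bf S x x)" unfolding bf_def using x Sc by (subst cprod_comm[of _ n]) auto
    finally show ?thesis using psdD[OF S x] by simp
  qed
  then show "psd n T" unfolding psd_def bf_def using T hT by auto
qed

lemma key_psd:
  assumes S: "psd n S" and T: "T \<in> carrier_mat n n" and TS: "T * S = 1\<^sub>m n"
    and psi: "\<psi> \<in> carrier_mat n r"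
    and M: "mat_adjoint \<psi> * T * \<psi> = complex_of_real a \<cdot>\<^sub>m 1\<^sub>m r" and a: "a \<ge> 0"
  shows "psd n (complex_of_real a \<cdot>\<^sub>m S - \<psi> * mat_adjoint \<psi>)"
proof -
  have Sc: "S \<in> carrier_mat n n" and hS: "hermitian S" using S unfolding psd_def by auto
  note Tp = T_props[OF S T TS]
  have ST: "S * T = 1\<^sub>m n" and hT: "hermitian T" and Tpsd: "psd n T" using Tp by auto
  have psia: "mat_adjoint \<psi> \<in> carrier_mat r n" using psi by (rule adj_carrier)
  define G where "G = \<psi> * mat_adjoint \<psi>"
  have Gc: "G \<in> carrier_mat n n" unfolding G_def using psi psia by simp
  have Gpsd: "psd n G" unfolding G_def using psd_gram[OF psi] .
  have hG: "hermitian G" using Gpsd unfolding psd_def by auto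
  have C: "complex_of_real a \<cdot>\<^sub>m S - G \<in> carrier_mat n n" using Sc Gc by (simp add: minus_carrier_mat)
  have herm: "hermitian (complex_of_real a \<cdot>\<^sub>m S - G)" unfolding hermitian_def
    using adj_minus[of "complex_of_real a \<cdot>\<^sub>m S" n n G] Sc Gc adj_smult adj_herm[OF hS] adj_herm[OF hG]
    by simp
  have "0 \<le> Re (bf (complex_of_real a \<cdot>\<^sub>m S - G) v v)" if v: "v \<in> carrier_vec n" for v
  proof -
    define u where "u = S *\<^sub>v v"
    have u: "u \<in> carrier_vec n" unfolding u_def using Sc v by simp
    have vu: "v = T *\<^sub>v u" unfolding u_def using Sc T v TS
      by (metis assoc_mult_mat_vec one_mult_mat_vec)
    define w where "w = mat_adjoint \<psi> *\<^sub>v v"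
    have w: "w \<in> carrier_vec r" unfolding w_def using psia v by simp
    define y where "y = \<psi> *\<^sub>v w"
    have y: "y \<in> carrier_vec n" unfolding y_def using psi w by simp
    define W where "W = Re (w \<bullet>c w)"
    have W0: "W \<ge> 0" unfolding W_def using cprod_self(1) .
    have Ww: "w \<bullet>c w = complex_of_real W" unfolding W_def using cprod_self(2)[of w] by (simp add: complex_eq_iff)
    have 1: "bf (complex_of_real a \<cdot>\<^sub>m S - G) v v = complex_of_real a * bf S v v - bf G v v"
      using Sc Gc v by (simp add: bf_minus_mat[of _ n] bf_smult_mat[of _ n])
    have 2: "bf G v v = w \<bullet>c w"
    proof -
      have "bf G v v = (\<psi> *\<^sub>v w) \<bullet>c v" unfolding bf_def G_def w_def using assoc_mult_mat_vec[OF psi psia v] by simp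
      also have "\<dots> = w \<bullet>c w" using adj_mult_vec[OF psi w v] unfolding w_def by simp
      finally show ?thesis .
    qed
    have 3: "bf S v v = cnj (bf T u u)"
    proof -
      have "bf S v v = u \<bullet>c (T *\<^sub>v u)" unfolding bf_def u_def[symmetric] using vu by simp
      also have "\<dots> = cnj (bf T u u)" unfolding bf_def using u T by (subst cprod_comm[of _ n]) auto
      finally show ?thesis .
    qed
    have wu: "mat_adjoint \<psi> *\<^sub>v (T *\<^sub>v u) = w" unfolding w_def using vu by simp
    have 4: "bf T u y = w \<bullet>c w"
    proof -
      have "bf T u y = (T *\<^sub>v u) \<bullet>c (\<psi> *\<^sub>v w)" unfolding bf_def y_def ..
      also have "\<dots> = (mat_adjoint \<psi> *\<^sub>v (T *\<^sub>v u)) \<bullet>c w"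
        using adj_mult_vec[OF psia _ w, of "T *\<^sub>v u"] T u by simp
      finally show ?thesis using wu by simp
    qed
    have 5: "bf T y u = w \<bullet>c w" using bf_herm[OF hT T y u] 4 Ww by simp
    have 6: "bf T y y = complex_of_real a * (w \<bullet>c w)"
    proof -
      have "bf T y y = (mat_adjoint \<psi> *\<^sub>v (T *\<^sub>v (\<psi> *\<^sub>v w))) \<bullet>c w"
        unfolding bf_def y_def using adj_mult_vec[OF psia _ w, of "T *\<^sub>v (\<psi> *\<^sub>v w)"] T psi w by simp
      also have "mat_adjoint \<psi> *\<^sub>v (T *\<^sub>v (\<psi> *\<^sub>v w)) = (mat_adjoint \<psi> * T * \<psi>) *\<^sub>v w"
      proof -
        have c1: "mat_adjoint \<psi> * T \<in> carrier_mat r n" using psia T by simp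
        have c2: "\<psi> *\<^sub>v w \<in> carrier_vec n" using psi w by simp
        show ?thesis using assoc_mult_mat_vec[OF c1 psi w] assoc_mult_mat_vec[OF psia T c2] by simp
      qed
      also have "\<dots> = complex_of_real a \<cdot>\<^sub>v w" unfolding M using w by (simp add: smult_mat_vec[of _ r])
      finally show ?thesis using w by simp
    qed
    have U0: "Re (bf T u u) \<ge> 0" using psdD[OF Tpsd u] .
    have quad: "0 \<le> Re (bf T u u) - 2 * s * W + s * s * a * W" for s :: real
    proof -
      define z where "z = u - complex_of_real s \<cdot>\<^sub>v y"
      have z: "z \<in> carrier_vec n" unfolding z_def using u y by simp
      have "bf T z z = bf T u u - s * bf T y u - s * bf T u y + s * s * bf T y y"
        unfolding z_def using T u y
        by (simp add: bf_minus_left[of _ n] bf_minus_right[of _ n] bf_smult_left[of _ n] bf_smult_right[of _ n] algebra_simps)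
      then have "Re (bf T z z) = Re (bf T u u) - 2 * s * W + s * s * a * W"
        using 4 5 6 Ww by simp
      then show ?thesis using psdD[OF Tpsd z] by simp
    qed
    have key: "W \<le> a * Re (bf T u u)"
    proof (cases "W = 0")
      case True then show ?thesis using a U0 by simp
    next
      case False
      then have Wp: "W > 0" using W0 by simp
      show ?thesis
      proof (cases "a = 0")
        case True
        have "0 \<le> Re (bf T u u) - 2 * ((Re (bf T u u) + 1) / (2 * W)) * W"
          using quad[of "(Re (bf T u u) + 1) / (2 * W)"] True by simp
        also have "\<dots> = -1" using Wp by (simp add: field_simps)
        finally show ?thesis by simp
      next
        case False
        then have ap: "a > 0" using a by simp
        have "0 \<le> Re (bf T u u) - 2 * (1/a) * W + (1/a) * (1/a) * a * W" using quad[of "1/a"] .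
        also have "\<dots> = Re (bf T u u) - W / a" using ap by (simp add: field_simps)
        finally show ?thesis using ap by (simp add: field_simps)
      qed
    qed
    have "Re (bf (complex_of_real a \<cdot>\<^sub>m S - G) v v) = a * Re (bf T u u) - W"
      unfolding 1 2 3 W_def by simp
    then show ?thesis using key by simp
  qed
  then show ?thesis unfolding psd_def bf_def using C herm unfolding G_def by auto
qed


lemma msum_cong: "(\<And>i. i < k \<Longrightarrow> f i = g i) \<Longrightarrow> msum n f k = msum n g k"
  by (induct k) auto

lemma trace_helpers:
  assumes psi: "\<psi> \<in> carrier_mat n r" and T: "T \<in> carrier_mat n n"
    and M: "mat_adjoint \<psi> * T * \<psi> = c \<cdot>\<^sub>m 1\<^sub>m r"
  shows "mat_trace ((\<psi> * mat_adjoint \<psi>) * ((T * \<psi>) * (mat_adjoint \<psi> * T))) = c * c * of_nat r"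
    "mat_trace (T * (\<psi> * mat_adjoint \<psi>)) = c * of_nat r"
proof -
  have psia: "mat_adjoint \<psi> \<in> carrier_mat r n" using psi by (rule adj_carrier)
  have Tp: "T * \<psi> \<in> carrier_mat n r" using T psi by simp
  have aT: "mat_adjoint \<psi> * T \<in> carrier_mat r n" using T psia by simp
  have Mc: "mat_adjoint \<psi> * T * \<psi> \<in> carrier_mat r r" using aT psi by simp
  define X where "X = mat_adjoint \<psi> * ((T * \<psi>) * (mat_adjoint \<psi> * T))"
  have Xc: "X \<in> carrier_mat r n" unfolding X_def using psia Tp aT by simp
  have "(\<psi> * mat_adjoint \<psi>) * ((T * \<psi>) * (mat_adjoint \<psi> * T)) = \<psi> * X"
  proof -
    have C: "(T * \<psi>) * (mat_adjoint \<psi> * T) \<in> carrier_mat n n" using Tp aT by simp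
    show ?thesis unfolding X_def using assoc_mult_mat[OF psi psia C] .
  qed
  then have "mat_trace ((\<psi> * mat_adjoint \<psi>) * ((T * \<psi>) * (mat_adjoint \<psi> * T))) = mat_trace (X * \<psi>)"
    using trace_comm[OF psi Xc] by simp
  also have "X * \<psi> = (mat_adjoint \<psi> * T * \<psi>) * (mat_adjoint \<psi> * T * \<psi>)"
  proof -
    have BC: "(T * \<psi>) * (mat_adjoint \<psi> * T) \<in> carrier_mat n n" using Tp aT by simp
    have CD: "(mat_adjoint \<psi> * T) * \<psi> \<in> carrier_mat r r" using aT psi by simp
    have "X * \<psi> = mat_adjoint \<psi> * (((T * \<psi>) * (mat_adjoint \<psi> * T)) * \<psi>)"
      unfolding X_def using assoc_mult_mat[OF psia BC psi] .
    also have "((T * \<psi>) * (mat_adjoint \<psi> * T)) * \<psi> = (T * \<psi>) * (mat_adjoint \<psi> * T * \<psi>)"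
      using assoc_mult_mat[OF Tp aT psi] .
    also have "mat_adjoint \<psi> * ((T * \<psi>) * (mat_adjoint \<psi> * T * \<psi>)) = (mat_adjoint \<psi> * (T * \<psi>)) * (mat_adjoint \<psi> * T * \<psi>)"
      using assoc_mult_mat[OF psia Tp CD] by simp
    also have "mat_adjoint \<psi> * (T * \<psi>) = mat_adjoint \<psi> * T * \<psi>"
      using assoc_mult_mat[OF psia T psi] by simp
    finally show ?thesis .
  qed
  also have "\<dots> = (c * c) \<cdot>\<^sub>m 1\<^sub>m r" unfolding M
    by (simp add: mult_smult_assoc_mat[of _ r r] mult_smult_distrib[of _ r r _ r]) (rule eq_matI, auto)
  also have "mat_trace \<dots> = c * c * of_nat r" by (simp add: trace_smult[of _ r] trace_one)
  finally show "mat_trace ((\<psi> * mat_adjoint \<psi>) * ((T * \<psi>) * (mat_adjoint \<psi> * T))) = c * c * of_nat r" .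
  have "T * (\<psi> * mat_adjoint \<psi>) = (T * \<psi>) * mat_adjoint \<psi>" using assoc_mult_mat[OF T psi psia] by simp
  then have "mat_trace (T * (\<psi> * mat_adjoint \<psi>)) = mat_trace (mat_adjoint \<psi> * (T * \<psi>))"
    using trace_comm[OF Tp psia] by simp
  also have "mat_adjoint \<psi> * (T * \<psi>) = mat_adjoint \<psi> * T * \<psi>" using assoc_mult_mat[OF psia T psi] by simp
  also have "mat_trace \<dots> = c * of_nat r" unfolding M by (simp add: trace_smult[of _ r] trace_one)
  finally show "mat_trace (T * (\<psi> * mat_adjoint \<psi>)) = c * of_nat r" .
qed



theorem theorem1:
  fixes n m :: nat
    and \<rho> \<phi> :: "nat \<Rightarrow> complex mat"
    and r :: "nat \<Rightarrow> nat"
    and p :: "nat \<Rightarrow> real"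
    and S T :: "complex mat"
    and \<alpha> :: complex
  defines "\<psi> \<equiv> (\<lambda>i. complex_of_real (sqrt (p i)) \<cdot>\<^sub>m \<phi> i)"
  defines "\<mu> \<equiv> (\<lambda>i. T * \<psi> i)"
  defines "\<Sigma> \<equiv> (\<lambda>i. \<mu> i * mat_adjoint (\<mu> i))"
  assumes dens: "\<forall>i<m. density_op n (\<rho> i)"
    and span: "spans n (support_eigvecs m \<rho>)"
    and ppos: "\<forall>i<m. p i > 0"
    and psum: "(\<Sum>i<m. p i) = 1"
    and fact: "\<forall>i<m. \<phi> i \<in> carrier_mat n (r i) \<and> \<rho> i = \<phi> i * mat_adjoint (\<phi> i)"
    and S_sqrt: "psd n S" "S * S = msum n (\<lambda>i. \<psi> i * mat_adjoint (\<psi> i)) m"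
    and T_inv: "T \<in> carrier_mat n n" "T * S = 1\<^sub>m n"
    and const: "\<forall>i<m. mat_adjoint (\<mu> i) * \<psi> i = \<alpha> \<cdot>\<^sub>m 1\<^sub>m (r i)"
  shows "is_measurement n m \<Sigma> \<and>
         (\<forall>Pm. is_measurement n m Pm \<longrightarrow> prob_detect m p \<rho> Pm \<le> prob_detect m p \<rho> \<Sigma>)"
proof -
  have Sc: "S \<in> carrier_mat n n" and hS: "hermitian S" using S_sqrt(1) unfolding psd_def by auto
  note Tp = T_props[OF S_sqrt(1) T_inv(1) T_inv(2)]
  have ST: "S * T = 1\<^sub>m n" and hT: "hermitian T" and Tpsd: "psd n T" using Tp by auto
  have T: "T \<in> carrier_mat n n" using T_inv(1) .
  have adjT: "mat_adjoint T = T" using adj_herm[OF hT] .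
  have phi: "\<phi> i \<in> carrier_mat n (r i)" if "i < m" for i using fact that by auto
  have psi: "\<psi> i \<in> carrier_mat n (r i)" if "i < m" for i unfolding \<psi>_def using phi[OF that] by simp
  have psia: "mat_adjoint (\<psi> i) \<in> carrier_mat (r i) n" if "i < m" for i using psi[OF that] by (rule adj_carrier)
  define G where "G = (\<lambda>i. \<psi> i * mat_adjoint (\<psi> i))"
  have Gc: "G i \<in> carrier_mat n n" if "i < m" for i unfolding G_def using psi[OF that] psia[OF that] by simp
  have SS: "S * S = msum n G m" using S_sqrt(2) unfolding G_def .
  have adjmu: "mat_adjoint (\<mu> i) = mat_adjoint (\<psi> i) * T" if "i < m" for i
    unfolding \<mu>_def using adj_mult[OF T psi[OF that]] adjT by simp
  have M: "mat_adjoint (\<psi> i) * T * \<psi> i = \<alpha> \<cdot>\<^sub>m 1\<^sub>m (r i)" if "i < m" for i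
  proof -
    have "mat_adjoint (\<mu> i) * \<psi> i = \<alpha> \<cdot>\<^sub>m 1\<^sub>m (r i)" using const that by auto
    then show ?thesis using adjmu[OF that] by simp
  qed
  have Sig: "\<Sigma> i = T * G i * T" if i: "i < m" for i
  proof -
    have "\<Sigma> i = (T * \<psi> i) * (mat_adjoint (\<psi> i) * T)" unfolding \<Sigma>_def using adjmu[OF i] unfolding \<mu>_def by simp
    also have "\<dots> = T * (\<psi> i * (mat_adjoint (\<psi> i) * T))"
      using assoc_mult_mat[OF T psi[OF i], of "mat_adjoint (\<psi> i) * T" n] psia[OF i] T by simp
    also have "\<psi> i * (mat_adjoint (\<psi> i) * T) = G i * T"
      unfolding G_def using assoc_mult_mat[OF psi[OF i] psia[OF i] T] by simp
    also have "T * (G i * T) = T * G i * T" using assoc_mult_mat[OF T Gc[OF i] T] by simp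
    finally show ?thesis .
  qed
  have Sigpsd: "psd n (\<Sigma> i)" if i: "i < m" for i
  proof -
    have "\<mu> i \<in> carrier_mat n (r i)" unfolding \<mu>_def using T psi[OF i] by simp
    then show ?thesis unfolding \<Sigma>_def by (rule psd_gram)
  qed
  have Sigc: "\<Sigma> i \<in> carrier_mat n n" if i: "i < m" for i using Sigpsd[OF i] unfolding psd_def by auto
  have sumSig: "msum n \<Sigma> m = 1\<^sub>m n"
  proof -
    have "msum n \<Sigma> m = msum n (\<lambda>i. T * G i * T) m" using Sig by (rule msum_cong)
    also have "\<dots> = T * msum n G m * T" using msum_conj[OF T T Gc] by simp
    also have "\<dots> = T * (S * S) * T" using SS by simp
    also have "\<dots> = (T * S) * (S * T)"
      using T Sc mult_carrier_mat[OF Sc T] by (simp add: assoc_mult_mat[of T n n S n "S * T" n] assoc_mult_mat[of T n n "S * S" n] assoc_mult_mat[of S n n T n] assoc_mult_mat[of T n n S n])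
    also have "\<dots> = 1\<^sub>m n" using T_inv(2) ST by simp
    finally show ?thesis .
  qed
  have meas: "is_measurement n m \<Sigma>" unfolding is_measurement_def using Sigpsd sumSig by auto
  have opt: "prob_detect m p \<rho> Pm \<le> prob_detect m p \<rho> \<Sigma>" if Pm: "is_measurement n m Pm" for Pm
  proof -
    have Pmpsd: "psd n (Pm i)" if "i < m" for i using Pm that unfolding is_measurement_def by auto
    have Pmc: "Pm i \<in> carrier_mat n n" if "i < m" for i using Pmpsd[OF that] unfolding psd_def by auto
    have sumPm: "msum n Pm m = 1\<^sub>m n" using Pm unfolding is_measurement_def by auto
    have rhoc: "\<rho> i \<in> carrier_mat n n" if "i < m" for i
      using dens that unfolding density_op_def psd_def by auto
    show ?thesis
    proof (cases "\<exists>j<m. 0 < r j")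
      case False
      have rho0: "\<rho> i = 0\<^sub>m n n" if i: "i < m" for i
      proof -
        have r0: "r i = 0" using False i by auto
        have eq: "\<rho> i = \<phi> i * mat_adjoint (\<phi> i)" using fact i by auto
        show ?thesis unfolding eq using phi[OF i] r0 by (intro eq_matI) (auto simp: scalar_prod_def)
      qed
      have z: "Re (mat_trace (\<rho> i * Q)) = 0" if i: "i < m" and Q: "Q \<in> carrier_mat n n" for i Q
        using rho0[OF i] Q by (simp add: trace_zero)
      have "prob_detect m p \<rho> Pm = 0" unfolding prob_detect_def using z Pmc by simp
      moreover have "prob_detect m p \<rho> \<Sigma> = 0" unfolding prob_detect_def using z Sigc by simp
      ultimately show ?thesis by simp
    next
      case True
      then obtain j where j: "j < m" "0 < r j" by auto
      define x where "x = col (\<psi> j) 0"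
      have x: "x \<in> carrier_vec n" unfolding x_def using psi[OF j(1)] unfolding carrier_vec_def carrier_mat_def by auto
      have Tpsi: "T * \<psi> j \<in> carrier_mat n (r j)" using T psi[OF j(1)] by simp
      have "\<alpha> = (\<alpha> \<cdot>\<^sub>m 1\<^sub>m (r j)) $$ (0,0)" using j by simp
      also have "\<dots> = (mat_adjoint (\<psi> j) * (T * \<psi> j)) $$ (0,0)"
        using M[OF j(1)] assoc_mult_mat[OF psia[OF j(1)] T psi[OF j(1)]] by simp
      also have "\<dots> = row (mat_adjoint (\<psi> j)) 0 \<bullet> col (T * \<psi> j) 0"
      proof -
        have d1: "0 < dim_row (mat_adjoint (\<psi> j))" using psi[OF j(1)] j by (metis adj_dims(1) carrier_matD(2))
        have d2: "0 < dim_col (T * \<psi> j)" using Tpsi j by (metis carrier_matD(2))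
        show ?thesis using index_mult_mat(1)[OF d1 d2] .
      qed
      also have "row (mat_adjoint (\<psi> j)) 0 = conjugate x"
        unfolding x_def using psi[OF j(1)] j by (intro eq_vecI) auto
      also have "col (T * \<psi> j) 0 = T *\<^sub>v x" unfolding x_def using col_mult2[OF T psi[OF j(1)] j(2)] .
      also have "conjugate x \<bullet> (T *\<^sub>v x) = bf T x x"
        unfolding bf_def using conjugate_vec_sprod_comm[of "T *\<^sub>v x" n x] T x by simp
      finally have al: "\<alpha> = bf T x x" .
      have alr: "Im \<alpha> = 0" using bf_herm[OF hT T x x] al by (metis cnj.sel(2) neg_equal_zero)
      define a where "a = Re \<alpha>"
      have a0: "a \<ge> 0" unfolding a_def al using psdD[OF Tpsd x] .
      have aa: "\<alpha> = complex_of_real a" unfolding a_def using alr by (simp add: complex_eq_iff)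
      have Ma: "mat_adjoint (\<psi> i) * T * \<psi> i = complex_of_real a \<cdot>\<^sub>m 1\<^sub>m (r i)" if "i < m" for i
        using M[OF that] aa by simp
      have KP: "psd n (complex_of_real a \<cdot>\<^sub>m S - G i)" if i: "i < m" for i
        unfolding G_def using key_psd[OF S_sqrt(1) T T_inv(2) psi[OF i] Ma[OF i] a0] .
      have Grho: "G i = complex_of_real (p i) \<cdot>\<^sub>m \<rho> i" if i: "i < m" for i
      proof -
        define c where "c = complex_of_real (sqrt (p i))"
        have phia: "mat_adjoint (\<phi> i) \<in> carrier_mat (r i) n" using phi[OF i] by (rule adj_carrier)
        have pp: "p i > 0" using ppos i by auto
        have cc: "c * c = complex_of_real (p i)" unfolding c_def using pp
          by (simp flip: of_real_mult)
        have "G i = (c \<cdot>\<^sub>m \<phi> i) * (c \<cdot>\<^sub>m mat_adjoint (\<phi> i))"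
          unfolding G_def \<psi>_def c_def by (simp add: adj_smult)
        also have "\<dots> = c \<cdot>\<^sub>m (c \<cdot>\<^sub>m (\<phi> i * mat_adjoint (\<phi> i)))"
          using phi[OF i] phia by (simp add: mult_smult_assoc_mat[of _ n "r i"] mult_smult_distrib[of _ n "r i" _ n])
        also have "\<dots> = (c * c) \<cdot>\<^sub>m (\<phi> i * mat_adjoint (\<phi> i))" by (rule eq_matI) auto
        also have "\<phi> i * mat_adjoint (\<phi> i) = \<rho> i" using fact i by auto
        finally show ?thesis unfolding cc .
      qed
      have pd: "p i * Re (mat_trace (\<rho> i * Q)) = Re (mat_trace (G i * Q))"
        if i: "i < m" and Q: "Q \<in> carrier_mat n n" for i Q
      proof -
        have "G i * Q = complex_of_real (p i) \<cdot>\<^sub>m (\<rho> i * Q)"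
          unfolding Grho[OF i] using mult_smult_assoc_mat[OF rhoc[OF i] Q] .
        then show ?thesis using rhoc[OF i] Q by (simp add: trace_smult[of _ n])
      qed
      have bound: "Re (mat_trace (G i * Pm i)) \<le> a * Re (mat_trace (S * Pm i))" if i: "i < m" for i
      proof -
        have "0 \<le> Re (mat_trace ((complex_of_real a \<cdot>\<^sub>m S - G i) * Pm i))"
          using trace_psd[OF KP[OF i] Pmpsd[OF i]] .
        also have "(complex_of_real a \<cdot>\<^sub>m S - G i) * Pm i = complex_of_real a \<cdot>\<^sub>m (S * Pm i) - G i * Pm i"
          using minus_mult_distrib_mat[of "complex_of_real a \<cdot>\<^sub>m S" n n "G i" "Pm i" n] Sc Gc[OF i] Pmc[OF i]
            mult_smult_assoc_mat[OF Sc Pmc[OF i]] by simp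
        also have "mat_trace \<dots> = complex_of_real a * mat_trace (S * Pm i) - mat_trace (G i * Pm i)"
          using Sc Gc[OF i] Pmc[OF i] by (simp add: trace_minus[of _ n] trace_smult[of _ n])
        finally show ?thesis by simp
      qed
      have upper: "prob_detect m p \<rho> Pm \<le> a * Re (mat_trace S)"
      proof -
        have "prob_detect m p \<rho> Pm = (\<Sum>i<m. Re (mat_trace (G i * Pm i)))"
          unfolding prob_detect_def using pd Pmc by simp
        also have "\<dots> \<le> (\<Sum>i<m. a * Re (mat_trace (S * Pm i)))"
          using bound by (intro sum_mono) auto
        also have "\<dots> = a * Re (\<Sum>i<m. mat_trace (S * Pm i))"
          by (simp add: sum_distrib_left Re_sum)
        also have "(\<Sum>i<m. mat_trace (S * Pm i)) = mat_trace (S * msum n Pm m)"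
          using trace_mult_msum[OF Sc Pmc] by simp
        also have "S * msum n Pm m = S" unfolding sumPm using Sc by simp
        finally show ?thesis .
      qed
      have trS: "Re (mat_trace S) = (\<Sum>i<m. a * real (r i))"
      proof -
        have "S = (T * S) * S" unfolding T_inv(2) using Sc by simp
        also have "\<dots> = T * (S * S)" using assoc_mult_mat[OF T Sc Sc] .
        finally have "mat_trace S = mat_trace (T * msum n G m)" unfolding SS by simp
        also have "\<dots> = (\<Sum>i<m. mat_trace (T * G i))" using trace_mult_msum[OF T Gc] .
        also have "\<dots> = (\<Sum>i<m. complex_of_real a * of_nat (r i))"
          unfolding G_def using trace_helpers(2)[OF psi T Ma] by simp
        finally show ?thesis by (simp add: Re_sum)
      qed
      have val: "prob_detect m p \<rho> \<Sigma> = (\<Sum>i<m. a * a * real (r i))"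
      proof -
        have "prob_detect m p \<rho> \<Sigma> = (\<Sum>i<m. Re (mat_trace (G i * \<Sigma> i)))"
          unfolding prob_detect_def using pd Sigc by simp
        also have "\<dots> = (\<Sum>i<m. a * a * real (r i))"
        proof (rule sum.cong)
          fix i assume "i \<in> {..<m}"
          then have i: "i < m" by simp
          have "\<Sigma> i = (T * \<psi> i) * (mat_adjoint (\<psi> i) * T)"
            unfolding \<Sigma>_def using adjmu[OF i] unfolding \<mu>_def by simp
          then have "mat_trace (G i * \<Sigma> i) = complex_of_real a * complex_of_real a * of_nat (r i)"
            unfolding G_def using trace_helpers(1)[OF psi[OF i] T Ma[OF i]] by simp
          then show "Re (mat_trace (G i * \<Sigma> i)) = a * a * real (r i)" by simp
        qed simp
        finally show ?thesis .
      qed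
      have "a * Re (mat_trace S) = (\<Sum>i<m. a * a * real (r i))"
        unfolding trS by (simp add: sum_distrib_left mult_ac)
      then show ?thesis using upper val by simp
    qed
  qed
  show ?thesis using meas opt by auto
qed


end
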